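(* Let $C,A^1,\dots,A^m\in\mathbb{S}^n$, $b\in\mathbb{R}^m$, with $\mathbf{P}$ and $\mathbf{D}$ feasible and $\mathbf{D}$ of singularity degree one, and let $0\le r<n$ be such that, writing $L(y)=C-\sum_iA^iy_i$ in blocks $L_{11}(y)\in\mathbb{S}^r$, $L_{12}(y)\in\mathbb{R}^{r\times(n-r)}$, $L_{22}(y)\in\mathbb{S}^{n-r}$: (a) for every $y$, $L(y)\succeq0$ iff $L_{12}(y)=0$, $L_{22}(y)=0$, $L_{11}(y)\succeq0$; (b) some $y$ has $L_{12}(y)=0$, $L_{22}(y)=0$, $L_{11}(y)\succ0$; (c) there is $X=\mathrm{diag}(0,X_{22})$ with $X_{22}\succ0$, $C\bullet X=0$, $A^i\bullet X=0$ for all $i$. Let $M>0$ be a constant such that for all $t\ge0$ and $y$, $L_{22}(y)+tI_{22}\succeq0$ implies $tMI_{22}\succeq L_{22}(y)+tI_{22}$, and set $K:=M(v(\mathbf{P})-v(\mathbf{D})+2)$. For $\alpha>0$, $t>0$ consider $$\mathbf{RD1}(\alpha,t):\ \max_y\ b^Ty-\frac{\|L_{12}(y)\|_F^2}{M\alpha}\ \text{ s.t. } L(y)+t\alpha I\succeq0 .$$ Then for every $\alpha>0$ there exists $\hat t_\alpha>0$ such that, for every $t\in(0,\hat t_\alpha)$ and every optimal sequence $\{y^k\}$ of $\mathbf{RD1}(\alpha,t)$, we have $\|L_{12}(y^k)\|_F^2\le K\alpha$ for all sufficiently large $k$.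
   Context: $\mathbf{P}$: $\min_X C\bullet X$ s.t. $A^i\bullet X=b_i$, $X\succeq0$; $\mathbf{D}$: $\max_y b^Ty$ s.t. $C-\sum_iA^iy_i\succeq0$; $v(\mathbf{P}),v(\mathbf{D})$ are their (finite) optimal values. $\mathbf{D}$ has singularity degree one if it is feasible and there exists a nonzero $X\succeq0$ with $C\bullet X=0$, $A^i\bullet X=0$ for all $i$, such that some $y$ has $C-\sum_iA^iy_i$ in the relative interior of $\{Z\succeq0: Z\bullet X=0\}$. An optimal sequence of $\mathbf{RD1}(\alpha,t)$ is a sequence of feasible points whose objective values converge to the optimal value (supremum) of $\mathbf{RD1}(\alpha,t)$. $\|\cdot\|_F$ is the Frobenius norm; $I_{22}$ is the $(n-r)\times(n-r)$ identity. *)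

theory Defs
  imports "HOL-Analysis.Analysis"
begin

text \<open>Matrices are represented as functions nat => nat => real; an n x n matrix
  is one whose entries vanish outside the index range {0..<n} x {0..<n}.\<close>

type_synonym rmat = "nat \<Rightarrow> nat \<Rightarrow> real"

definition Smat :: "nat \<Rightarrow> rmat set" where
  "Smat n = {A. (\<forall>i<n. \<forall>j<n. A i j = A j i) \<and> (\<forall>i j. \<not> (i < n \<and> j < n) \<longrightarrow> A i j = 0)}"

definition quad :: "nat \<Rightarrow> rmat \<Rightarrow> (nat \<Rightarrow> real) \<Rightarrow> real" where
  "quad n A x = (\<Sum>i<n. \<Sum>j<n. x i * A i j * x j)"

definition psd :: "nat \<Rightarrow> rmat \<Rightarrow> bool" where
  "psd n A \<longleftrightarrow> A \<in> Smat n \<and> (\<forall>x. 0 \<le> quad n A x)"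

definition pd :: "nat \<Rightarrow> rmat \<Rightarrow> bool" where
  "pd n A \<longleftrightarrow> A \<in> Smat n \<and> (\<forall>x. (\<exists>i<n. x i \<noteq> 0) \<longrightarrow> 0 < quad n A x)"

definition frob :: "nat \<Rightarrow> rmat \<Rightarrow> rmat \<Rightarrow> real" where
  "frob n A B = (\<Sum>i<n. \<Sum>j<n. A i j * B i j)"

definition frob_norm :: "nat \<Rightarrow> rmat \<Rightarrow> real" where
  "frob_norm n A = sqrt (frob n A A)"

definition idm :: "nat \<Rightarrow> rmat" where
  "idm n = (\<lambda>i j. if i < n \<and> j = i then 1 else 0)"

definition Lmap :: "nat \<Rightarrow> rmat \<Rightarrow> (nat \<Rightarrow> rmat) \<Rightarrow> (nat \<Rightarrow> real) \<Rightarrow> rmat" where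
  "Lmap m C A y = (\<lambda>a b. C a b - (\<Sum>i<m. A i a b * y i))"

definition bty :: "nat \<Rightarrow> (nat \<Rightarrow> real) \<Rightarrow> (nat \<Rightarrow> real) \<Rightarrow> real" where
  "bty m b y = (\<Sum>i<m. b i * y i)"

definition blk11 :: "nat \<Rightarrow> rmat \<Rightarrow> rmat" where
  "blk11 r Z = (\<lambda>i j. if i < r \<and> j < r then Z i j else 0)"

definition blk12 :: "nat \<Rightarrow> nat \<Rightarrow> rmat \<Rightarrow> rmat" where
  "blk12 n r Z = (\<lambda>i j. if i < r \<and> j < n - r then Z i (r + j) else 0)"

definition blk22 :: "nat \<Rightarrow> nat \<Rightarrow> rmat \<Rightarrow> rmat" where
  "blk22 n r Z = (\<lambda>i j. if i < n - r \<and> j < n - r then Z (r + i) (r + j) else 0)"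

definition norm12_sq :: "nat \<Rightarrow> nat \<Rightarrow> rmat \<Rightarrow> real" where
  "norm12_sq n r Z = (\<Sum>i<r. \<Sum>j<n - r. (blk12 n r Z i j)\<^sup>2)"

definition vP :: "nat \<Rightarrow> nat \<Rightarrow> rmat \<Rightarrow> (nat \<Rightarrow> rmat) \<Rightarrow> (nat \<Rightarrow> real) \<Rightarrow> real" where
  "vP n m C A b = Inf {frob n C X | X. psd n X \<and> (\<forall>i<m. frob n (A i) X = b i)}"

definition vD :: "nat \<Rightarrow> nat \<Rightarrow> rmat \<Rightarrow> (nat \<Rightarrow> rmat) \<Rightarrow> (nat \<Rightarrow> real) \<Rightarrow> real" where
  "vD n m C A b = Sup {bty m b y | y. psd n (Lmap m C A y)}"

definition mat_aff_comb :: "rmat set \<Rightarrow> rmat set" where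
  "mat_aff_comb S = {W. \<exists>(k::nat) (c::nat \<Rightarrow> real) (Zs::nat \<Rightarrow> rmat). (\<forall>j<k. Zs j \<in> S) \<and> (\<Sum>j<k. c j) = 1 \<and>
       W = (\<lambda>a b. \<Sum>j<k. c j * Zs j a b)}"

definition mat_rel_interior :: "nat \<Rightarrow> rmat set \<Rightarrow> rmat set" where
  "mat_rel_interior n S = {Z \<in> S. \<exists>e>0. \<forall>W \<in> mat_aff_comb S.
       frob_norm n (\<lambda>a b. W a b - Z a b) < e \<longrightarrow> W \<in> S}"

definition sing_deg_one :: "nat \<Rightarrow> nat \<Rightarrow> rmat \<Rightarrow> (nat \<Rightarrow> rmat) \<Rightarrow> bool" where
  "sing_deg_one n m C A \<longleftrightarrow> (\<exists>y. psd n (Lmap m C A y)) \<and>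
     (\<exists>X. psd n X \<and> X \<noteq> (\<lambda>a b. 0) \<and> frob n C X = 0 \<and> (\<forall>i<m. frob n (A i) X = 0) \<and>
        (\<exists>y. Lmap m C A y \<in> mat_rel_interior n {Z. psd n Z \<and> frob n Z X = 0}))"

definition rd1_obj :: "nat \<Rightarrow> nat \<Rightarrow> nat \<Rightarrow> rmat \<Rightarrow> (nat \<Rightarrow> rmat) \<Rightarrow> (nat \<Rightarrow> real) \<Rightarrow> real
    \<Rightarrow> real \<Rightarrow> (nat \<Rightarrow> real) \<Rightarrow> real" where
  "rd1_obj n m r C A b M \<alpha> y = bty m b y - norm12_sq n r (Lmap m C A y) / (M * \<alpha>)"

definition rd1_feas :: "nat \<Rightarrow> nat \<Rightarrow> rmat \<Rightarrow> (nat \<Rightarrow> rmat) \<Rightarrow> real \<Rightarrow> real \<Rightarrow> (nat \<Rightarrow> real) \<Rightarrow> bool" where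
  "rd1_feas n m C A \<alpha> t y \<longleftrightarrow> psd n (\<lambda>a b. Lmap m C A y a b + t * \<alpha> * idm n a b)"

definition rd1_opt_seq :: "nat \<Rightarrow> nat \<Rightarrow> nat \<Rightarrow> rmat \<Rightarrow> (nat \<Rightarrow> rmat) \<Rightarrow> (nat \<Rightarrow> real) \<Rightarrow> real
    \<Rightarrow> real \<Rightarrow> real \<Rightarrow> (nat \<Rightarrow> nat \<Rightarrow> real) \<Rightarrow> bool" where
  "rd1_opt_seq n m r C A b M \<alpha> t ys \<longleftrightarrow>
     (\<forall>k. rd1_feas n m C A \<alpha> t (ys k)) \<and>
     ((\<lambda>k. ereal (rd1_obj n m r C A b M \<alpha> (ys k))) \<longlonglongrightarrow>
        (SUP y \<in> {y. rd1_feas n m C A \<alpha> t y}. ereal (rd1_obj n m r C A b M \<alpha> y)))"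

end

theory Submission imports Defs begin

definition bil :: "nat \<Rightarrow> rmat \<Rightarrow> (nat \<Rightarrow> real) \<Rightarrow> (nat \<Rightarrow> real) \<Rightarrow> real" where
  "bil n Q x y = (\<Sum>i<n. \<Sum>j<n. x i * Q i j * y j)"

lemma quad_add: "quad n Q (\<lambda>i. x i + s * y i) = quad n Q x + s * (bil n Q x y + bil n Q y x) + s^2 * quad n Q y"
  unfolding quad_def bil_def
  by (simp add: algebra_simps sum.distrib sum_distrib_left power2_eq_square)

lemma bil_sym: assumes "\<forall>i<n. \<forall>j<n. Q i j = Q j i" shows "bil n Q x y = bil n Q y x"
  unfolding bil_def
  apply (subst sum.swap)
  apply (rule sum.cong, simp)+
  using assms by simp

lemma bil_e: assumes "k < n" shows "bil n Q x (\<lambda>i. if i = k then 1 else 0) = (\<Sum>i<n. x i * Q i k)"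
  unfolding bil_def using assms by (simp add: if_distrib cong: if_cong)

lemma quad_bil: "quad n Q x = bil n Q x x" unfolding quad_def bil_def by simp

lemma quad_e: assumes "k < n" shows "quad n Q (\<lambda>i. if i = k then 1 else 0) = Q k k"
proof -
  have "(\<Sum>i<n. (if i = k then 1 else 0) * Q i k) = (\<Sum>i<n. if i = k then Q k k else 0)" by (rule sum.cong) auto
  then show ?thesis using assms by (simp add: quad_bil bil_e)
qed

definition psdq :: "nat \<Rightarrow> rmat \<Rightarrow> bool" where
  "psdq n Q \<longleftrightarrow> (\<forall>i<n. \<forall>j<n. Q i j = Q j i) \<and> (\<forall>x. 0 \<le> quad n Q x)"

lemma psdq_basic:
  assumes "psdq n Q" "k < n"
  shows "0 \<le> Q k k"
    and "\<And>x s. 0 \<le> quad n Q x + 2 * s * (\<Sum>j<n. Q k j * x j) + s^2 * Q k k"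
proof -
  show "0 \<le> Q k k" using assms quad_e[OF assms(2), of Q] unfolding psdq_def by metis
  fix x s
  have sy: "\<forall>i<n. \<forall>j<n. Q i j = Q j i" using assms unfolding psdq_def by auto
  have "0 \<le> quad n Q (\<lambda>i. x i + s * (if i = k then 1 else 0))" using assms unfolding psdq_def by auto
  also have "\<dots> = quad n Q x + s * (bil n Q x (\<lambda>i. if i = k then 1 else 0) + bil n Q x (\<lambda>i. if i = k then 1 else 0)) + s^2 * Q k k"
    by (simp add: quad_add quad_e[OF assms(2)] bil_sym[OF sy, of _ x])
  also have "bil n Q x (\<lambda>i. if i = k then 1 else 0) = (\<Sum>j<n. Q k j * x j)"
    using bil_e[OF assms(2)] sy assms(2) by (auto intro!: sum.cong simp: mult.commute)
  finally show "0 \<le> quad n Q x + 2 * s * (\<Sum>j<n. Q k j * x j) + s^2 * Q k k" by (simp add: algebra_simps)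
qed


lemma psdq_row_zero:
  assumes "psdq n Q" "k < n" "Q k k = 0" "j < n"
  shows "Q k j = 0"
proof -
  have r0: "(\<Sum>j<n. Q k j * x j) = 0" for x
  proof (rule ccontr)
    let ?r = "\<Sum>j<n. Q k j * x j"
    assume nz: "?r \<noteq> 0"
    have "0 \<le> quad n Q x + 2 * (- (quad n Q x + 1) / (2 * ?r)) * ?r + (- (quad n Q x + 1) / (2 * ?r))^2 * Q k k"
      using psdq_basic(2)[OF assms(1,2)] by blast
    also have "\<dots> = -1" using nz assms(3) by (simp add: field_simps)
    finally show False by simp
  qed
  have "(\<Sum>i<n. Q k i * (if i = j then 1 else 0)) = (\<Sum>i<n. if i = j then Q k j else 0)" by (rule sum.cong) auto
  then show ?thesis using r0[of "\<lambda>i. if i = j then 1 else 0"] assms(4) by simp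
qed

lemma psdq_schur:
  assumes "psdq n Q" "k < n" "Q k k > 0"
  shows "psdq n (\<lambda>i j. Q i j - Q k i * Q k j / Q k k)"
proof -
  have sy: "\<forall>i<n. \<forall>j<n. Q i j = Q j i" using assms unfolding psdq_def by auto
  have "0 \<le> quad n (\<lambda>i j. Q i j - Q k i * Q k j / Q k k) x" for x
  proof -
    let ?r = "\<Sum>j<n. Q k j * x j"
    have "quad n (\<lambda>i j. Q i j - Q k i * Q k j / Q k k) x = quad n Q x - (\<Sum>i<n. \<Sum>j<n. x i * (Q k i * Q k j / Q k k) * x j)"
      unfolding quad_def by (simp add: algebra_simps sum_subtractf)
    also have "(\<Sum>i<n. \<Sum>j<n. x i * (Q k i * Q k j / Q k k) * x j) = ?r * ?r / Q k k"
      by (simp add: sum_distrib_left sum_distrib_right sum_divide_distrib algebra_simps)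
    finally have e: "quad n (\<lambda>i j. Q i j - Q k i * Q k j / Q k k) x = quad n Q x - ?r * ?r / Q k k" .
    have "0 \<le> quad n Q x + 2 * (- ?r / Q k k) * ?r + (- ?r / Q k k)^2 * Q k k"
      using psdq_basic(2)[OF assms(1,2)] by blast
    also have "\<dots> = quad n Q x - ?r * ?r / Q k k" using assms(3) by (simp add: field_simps power2_eq_square)
    finally show ?thesis using e by simp
  qed
  then show ?thesis unfolding psdq_def using sy by (auto simp: mult.commute)
qed

lemma frob_psdq_aux:
  assumes P: "\<forall>x. 0 \<le> quad n P x"
  shows "d \<le> n \<Longrightarrow> \<forall>Q. psdq n Q \<and> (\<forall>i<n. \<forall>j<n. (i < n - d \<or> j < n - d) \<longrightarrow> Q i j = 0) \<longrightarrow> 0 \<le> frob n P Q"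
proof (induction d)
  case 0
  then show ?case unfolding frob_def by simp
next
  case (Suc d)
  let ?k = "n - Suc d"
  have kn: "?k < n" and k1: "Suc ?k = n - d" using Suc.prems by auto
  show ?case
  proof (intro allI impI)
    fix Q assume Q: "psdq n Q \<and> (\<forall>i<n. \<forall>j<n. (i < ?k \<or> j < ?k) \<longrightarrow> Q i j = 0)"
    have sy: "\<forall>i<n. \<forall>j<n. Q i j = Q j i" using Q unfolding psdq_def by auto
    have IH: "\<forall>Q. psdq n Q \<and> (\<forall>i<n. \<forall>j<n. (i < n - d \<or> j < n - d) \<longrightarrow> Q i j = 0) \<longrightarrow> 0 \<le> frob n P Q"
      using Suc by simp
    show "0 \<le> frob n P Q"
    proof (cases "Q ?k ?k = 0")
      case True
      have "Q ?k j = 0" if "j < n" for j using psdq_row_zero[of n Q ?k j] kn True that Q by blast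
      then have "\<forall>i<n. \<forall>j<n. (i < n - d \<or> j < n - d) \<longrightarrow> Q i j = 0"
        using Q sy k1 by (metis kn less_Suc_eq)
      then show ?thesis using IH Q by blast
    next
      case False
      have "0 \<le> Q ?k ?k" using psdq_basic(1)[of n Q ?k] kn Q by blast
      then have pos: "Q ?k ?k > 0" using False by linarith
      define Q' where "Q' = (\<lambda>i j. Q i j - Q ?k i * Q ?k j / Q ?k ?k)"
      have pQ': "psdq n Q'" unfolding Q'_def using psdq_schur[of n Q ?k] kn pos Q by blast
      have z: "\<forall>i<n. \<forall>j<n. (i < n - d \<or> j < n - d) \<longrightarrow> Q' i j = 0"
      proof (intro allI impI)
        fix i j assume ij: "i < n" "j < n" "i < n - d \<or> j < n - d"
        then consider "i < ?k" | "j < ?k" | "i = ?k" | "j = ?k" using k1 by linarith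
        then show "Q' i j = 0"
        proof cases
          case 1 then show ?thesis unfolding Q'_def using Q ij kn sy by auto
        next
          case 2 then show ?thesis unfolding Q'_def using Q ij kn sy by auto
        next
          case 3 then show ?thesis unfolding Q'_def using pos by simp
        next
          case 4 then show ?thesis unfolding Q'_def using pos sy ij kn by simp
        qed
      qed
      have "frob n P Q = frob n P Q' + quad n P (\<lambda>i. Q ?k i) / Q ?k ?k"
        unfolding frob_def quad_def Q'_def
        by (simp add: algebra_simps sum_subtractf sum_divide_distrib)
      moreover have "0 \<le> frob n P Q'" using IH pQ' z by blast
      moreover have "0 \<le> quad n P (\<lambda>i. Q ?k i) / Q ?k ?k" using P pos by simp
      ultimately show ?thesis by simp
    qed
  qed
qed

lemma frob_psdq:
  assumes "\<forall>x. 0 \<le> quad n P x" "psdq n Q"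
  shows "0 \<le> frob n P Q"
  using frob_psdq_aux[OF assms(1), of n] assms(2) by auto

lemma psd_psdq: "psd n X \<Longrightarrow> psdq n X"
  unfolding psd_def psdq_def Smat_def by auto

lemma frob_Lmap: "frob n (Lmap m C A y) X = frob n C X - (\<Sum>i<m. y i * frob n (A i) X)"
  unfolding frob_def Lmap_def
  by (simp add: algebra_simps sum_subtractf sum_distrib_left sum_distrib_right sum.swap[of _ "{..<m}"])

lemma frob_plus_id: "frob n (\<lambda>a b. L a b + c * idm n a b) X = frob n L X + c * (\<Sum>i<n. X i i)"
proof -
  have "(\<Sum>j<n. idm n i j * X i j) = (if i < n then X i i else 0)" for i
  proof -
    have "(\<Sum>j<n. idm n i j * X i j) = (\<Sum>j<n. if i < n \<and> j = i then X i i else 0)"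
      unfolding idm_def by (rule sum.cong) auto
    then show ?thesis by simp
  qed
  then show ?thesis unfolding frob_def
    by (simp add: algebra_simps sum.distrib sum_distrib_left flip: sum_distrib_left)
qed

lemma quad_plus_id: "quad n (\<lambda>a b. L a b + c * idm n a b) x = quad n L x + c * (\<Sum>i<n. (x i)^2)"
proof -
  have "(\<Sum>j<n. x i * idm n i j * x j) = (if i < n then (x i)^2 else 0)" for i
  proof -
    have "(\<Sum>j<n. x i * idm n i j * x j) = (\<Sum>j<n. if i < n \<and> j = i then (x i)^2 else 0)"
      unfolding idm_def by (rule sum.cong) (auto simp: power2_eq_square)
    then show ?thesis by simp
  qed
  then show ?thesis unfolding quad_def
    by (simp add: algebra_simps sum.distrib sum_distrib_left flip: sum_distrib_left)
qed

lemma Lmap_Smat: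
  assumes "C \<in> Smat n" "\<forall>i<m. A i \<in> Smat n"
  shows "Lmap m C A y \<in> Smat n"
  using assms unfolding Smat_def Lmap_def by auto

lemma rd1_bound:
  assumes "psd n (\<lambda>a b. Lmap m C A y a b + c * idm n a b)" "psd n X" "\<forall>i<m. frob n (A i) X = b i"
  shows "bty m b y \<le> frob n C X + c * (\<Sum>i<n. X i i)"
proof -
  have "0 \<le> frob n (\<lambda>a b. Lmap m C A y a b + c * idm n a b) X"
    using frob_psdq[of n _ X] assms(1,2) psd_psdq unfolding psd_def by blast
  also have "\<dots> = frob n C X - (\<Sum>i<m. y i * b i) + c * (\<Sum>i<n. X i i)"
    using assms(3) by (simp add: frob_plus_id frob_Lmap)
  finally show ?thesis unfolding bty_def by (simp add: mult.commute)
qed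

lemma trace_nonneg: "psd n X \<Longrightarrow> 0 \<le> (\<Sum>i<n. X i i)"
  using psdq_basic(1)[of n X] psd_psdq by (meson lessThan_iff sum_nonneg)

lemma norm12_zero: "blk12 n r Z = (\<lambda>i j. 0) \<Longrightarrow> norm12_sq n r Z = 0"
  unfolding norm12_sq_def by simp



theorem lemma4:
  fixes n m r :: nat and C :: rmat and A :: "nat \<Rightarrow> rmat" and b :: "nat \<Rightarrow> real"
    and M :: real
  assumes symC: "C \<in> Smat n"
    and symA: "\<forall>i<m. A i \<in> Smat n"
    and Pfeas: "\<exists>X. psd n X \<and> (\<forall>i<m. frob n (A i) X = b i)"
    and Dfeas: "\<exists>y. psd n (Lmap m C A y)"
    and sd1: "sing_deg_one n m C A"
    and rn: "r < n"
    and a: "\<forall>y. psd n (Lmap m C A y) \<longleftrightarrow>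
               (blk12 n r (Lmap m C A y) = (\<lambda>i j. 0) \<and> blk22 n r (Lmap m C A y) = (\<lambda>i j. 0)
                \<and> psd r (blk11 r (Lmap m C A y)))"
    and b: "\<exists>y. blk12 n r (Lmap m C A y) = (\<lambda>i j. 0) \<and> blk22 n r (Lmap m C A y) = (\<lambda>i j. 0)
                \<and> pd r (blk11 r (Lmap m C A y))"
    and c: "\<exists>X. X \<in> Smat n \<and> (\<forall>i j. \<not> (r \<le> i \<and> r \<le> j) \<longrightarrow> X i j = 0)
                \<and> pd (n - r) (blk22 n r X) \<and> frob n C X = 0 \<and> (\<forall>i<m. frob n (A i) X = 0)"
    and Mpos: "M > 0"
    and Mbound: "\<forall>t\<ge>0. \<forall>y. psd (n - r) (\<lambda>i j. blk22 n r (Lmap m C A y) i j + t * idm (n - r) i j)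
                   \<longrightarrow> psd (n - r) (\<lambda>i j. t * M * idm (n - r) i j
                         - (blk22 n r (Lmap m C A y) i j + t * idm (n - r) i j))"
  shows "\<forall>\<alpha>>0. \<exists>th>0. \<forall>t. 0 < t \<and> t < th \<longrightarrow>
           (\<forall>ys. rd1_opt_seq n m r C A b M \<alpha> t ys \<longrightarrow>
              (\<exists>k0. \<forall>k\<ge>k0. norm12_sq n r (Lmap m C A (ys k))
                               \<le> M * (vP n m C A b - vD n m C A b + 2) * \<alpha>))"
proof (intro allI impI)
  fix \<alpha> :: real assume apos: "\<alpha> > 0"
  define SP where "SP = {frob n C X | X. psd n X \<and> (\<forall>i<m. frob n (A i) X = b i)}"
  define SD where "SD = {bty m b y | y. psd n (Lmap m C A y)}"
  have "SP \<noteq> {}" using Pfeas unfolding SP_def by blast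
  then obtain p where "p \<in> SP" "p < vP n m C A b + 1/2"
    using cInf_lessD[of SP "vP n m C A b + 1/2"] unfolding vP_def SP_def by auto
  then obtain X1 where X1: "psd n X1" "\<forall>i<m. frob n (A i) X1 = b i" "frob n C X1 < vP n m C A b + 1/2"
    unfolding SP_def by blast
  have "SD \<noteq> {}" using Dfeas unfolding SD_def by blast
  then obtain q where "q \<in> SD" "vD n m C A b - 1/2 < q"
    using less_cSupD[of SD "vD n m C A b - 1/2"] unfolding vD_def SD_def by auto
  then obtain yD where yD: "psd n (Lmap m C A yD)" "vD n m C A b - 1/2 < bty m b yD"
    unfolding SD_def by blast
  define tr where "tr = (\<Sum>i<n. X1 i i)"
  have tr0: "0 \<le> tr" unfolding tr_def using trace_nonneg X1(1) .
  define th where "th = 1 / (2 * \<alpha> * (tr + 1))"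
  have thpos: "th > 0" unfolding th_def using apos tr0 by simp
  show "\<exists>th>0. \<forall>t. 0 < t \<and> t < th \<longrightarrow>
           (\<forall>ys. rd1_opt_seq n m r C A b M \<alpha> t ys \<longrightarrow>
              (\<exists>k0. \<forall>k\<ge>k0. norm12_sq n r (Lmap m C A (ys k))
                               \<le> M * (vP n m C A b - vD n m C A b + 2) * \<alpha>))"
  proof (intro exI[of _ th] conjI allI impI thpos)
    fix t ys assume t: "0 < t \<and> t < th" and ys: "rd1_opt_seq n m r C A b M \<alpha> t ys"
    have "t * (2 * \<alpha> * (tr + 1)) < 1"
    proof -
      have D: "0 < 2 * \<alpha> * (tr + 1)" using apos tr0 by simp
      show ?thesis using t pos_less_divide_eq[OF D, of t 1] unfolding th_def by simp
    qed
    moreover have "0 \<le> t * \<alpha>" using t apos by simp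
    ultimately have tsmall: "t * \<alpha> * tr \<le> 1/2" by (simp add: algebra_simps)
    have ub: "bty m b (ys k) < vP n m C A b + 1" for k
    proof -
      have "rd1_feas n m C A \<alpha> t (ys k)" using ys unfolding rd1_opt_seq_def by blast
      then have "bty m b (ys k) \<le> frob n C X1 + t * \<alpha> * tr"
        unfolding rd1_feas_def tr_def using rd1_bound X1 by blast
      then show ?thesis using X1(3) tsmall by linarith
    qed
    have objD: "rd1_obj n m r C A b M \<alpha> yD = bty m b yD"
      using a yD(1) norm12_zero unfolding rd1_obj_def by simp
    have Ls: "Lmap m C A yD \<in> Smat n" using Lmap_Smat symC symA .
    have "psd n (\<lambda>a b. Lmap m C A yD a b + t * \<alpha> * idm n a b)"
      unfolding psd_def
    proof
      show "(\<lambda>a b. Lmap m C A yD a b + t * \<alpha> * idm n a b) \<in> Smat n"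
        using Ls unfolding Smat_def idm_def by auto
      show "\<forall>x. 0 \<le> quad n (\<lambda>a b. Lmap m C A yD a b + t * \<alpha> * idm n a b) x"
        using yD(1) t apos unfolding psd_def by (simp add: quad_plus_id sum_nonneg)
    qed
    then have feasD: "yD \<in> {y. rd1_feas n m C A \<alpha> t y}" unfolding rd1_feas_def by simp
    have "ereal (vD n m C A b - 1) < ereal (rd1_obj n m r C A b M \<alpha> yD)" using objD yD(2) by simp
    also have "\<dots> \<le> (SUP y \<in> {y. rd1_feas n m C A \<alpha> t y}. ereal (rd1_obj n m r C A b M \<alpha> y))"
      using feasD by (rule SUP_upper)
    finally have lt: "ereal (vD n m C A b - 1) < (SUP y \<in> {y. rd1_feas n m C A \<alpha> t y}. ereal (rd1_obj n m r C A b M \<alpha> y))" .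
    have lim: "(\<lambda>k. ereal (rd1_obj n m r C A b M \<alpha> (ys k))) \<longlonglongrightarrow> (SUP y \<in> {y. rd1_feas n m C A \<alpha> t y}. ereal (rd1_obj n m r C A b M \<alpha> y))"
      using ys unfolding rd1_opt_seq_def by simp
    have "eventually (\<lambda>k. ereal (vD n m C A b - 1) < ereal (rd1_obj n m r C A b M \<alpha> (ys k))) sequentially"
      using order_tendstoD(1)[OF lim lt] .
    then obtain k0 where k0: "\<forall>k\<ge>k0. vD n m C A b - 1 < rd1_obj n m r C A b M \<alpha> (ys k)"
      unfolding eventually_sequentially by auto
    show "\<exists>k0. \<forall>k\<ge>k0. norm12_sq n r (Lmap m C A (ys k)) \<le> M * (vP n m C A b - vD n m C A b + 2) * \<alpha>"
    proof (intro exI[of _ k0] allI impI)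
      fix k assume "k0 \<le> k"
      then have h: "vD n m C A b - 1 < bty m b (ys k) - norm12_sq n r (Lmap m C A (ys k)) / (M * \<alpha>)"
        using k0 unfolding rd1_obj_def by blast
      have "norm12_sq n r (Lmap m C A (ys k)) / (M * \<alpha>) < vP n m C A b - vD n m C A b + 2"
        using h ub[of k] by linarith
      then show "norm12_sq n r (Lmap m C A (ys k)) \<le> M * (vP n m C A b - vD n m C A b + 2) * \<alpha>"
        using Mpos apos by (simp add: field_simps)
    qed
  qed
qed

end
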